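(* Let $\beta>0$ and $n\ge 1$. For every $0<r<R$, \[\lambda_\beta(B_r)\le\left(\frac{\mathcal{L}^n(B_R)}{\mathcal{L}^n(B_r)}\right)^{2/n}\lambda_\beta(B_R),\] where $B_r$ and $B_R$ are balls in $\mathbb{R}^n$ of radii $r$ and $R$ respectively.
   Context: For an open bounded Lipschitz set $A\subset\mathbb{R}^n$ and $\beta>0$, the Robin eigenvalue is $\lambda_\beta(A)=\inf\left\{\frac{\int_A|\nabla v|^2\,d\mathcal{L}^n+\beta\int_{\partial A}v^2\,d\mathcal{H}^{n-1}}{\int_A v^2\,d\mathcal{L}^n}\ :\ v\in W^{1,2}(A)\setminus\{0\}\right\}$. *)

theory Defs
  imports "HOL-Analysis.Analysis"
begin

text \<open>Size of a covering set C for the s-dimensional Hausdorff measure: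
  omega_s (diam C / 2)^s, with the convention that the empty set contributes 0
  (so that for s = 0 one obtains the counting measure).\<close>

definition haus_gauge :: "nat \<Rightarrow> 'a::euclidean_space set \<Rightarrow> real" where
  "haus_gauge s C = (if C = {} then 0 else unit_ball_vol (real s) * (diameter C / 2) ^ s)"

definition hausdorff_pre :: "nat \<Rightarrow> real \<Rightarrow> 'a::euclidean_space set \<Rightarrow> ennreal" where
  "hausdorff_pre s \<delta> E =
     Inf {(\<Sum>i. ennreal (haus_gauge s (C i))) | C :: nat \<Rightarrow> 'a set.
            E \<subseteq> (\<Union>i. C i) \<and> (\<forall>i. bounded (C i) \<and> diameter (C i) \<le> \<delta>)}"

definition hausdorff :: "nat \<Rightarrow> 'a::euclidean_space set \<Rightarrow> ennreal" where
  "hausdorff s E = (SUP \<delta>\<in>{0<..}. hausdorff_pre s \<delta> E)"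

text \<open>Integral of a nonnegative function f over S with respect to the outer measure
  H^s, via the layer-cake formula.\<close>

definition hausdorff_integral :: "nat \<Rightarrow> 'a::euclidean_space set \<Rightarrow> ('a \<Rightarrow> real) \<Rightarrow> ennreal" where
  "hausdorff_integral s S f = (\<integral>\<^sup>+ t\<in>{0<..}. hausdorff s {x\<in>S. f x > t} \<partial>lborel)"

definition test_function :: "'a::euclidean_space set \<Rightarrow> ('a \<Rightarrow> real) \<Rightarrow> ('a \<Rightarrow> 'a) \<Rightarrow> bool" where
  "test_function A \<phi> D\<phi> \<longleftrightarrow>
     (\<forall>x. (\<phi> has_derivative (\<lambda>h. D\<phi> x \<bullet> h)) (at x)) \<and> continuous_on UNIV D\<phi> \<and>
     compact (closure {x. \<phi> x \<noteq> 0}) \<and> closure {x. \<phi> x \<noteq> 0} \<subseteq> A"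

definition weak_gradient :: "'a::euclidean_space set \<Rightarrow> ('a \<Rightarrow> real) \<Rightarrow> ('a \<Rightarrow> 'a) \<Rightarrow> bool" where
  "weak_gradient A v g \<longleftrightarrow>
     (\<forall>\<phi> D\<phi>. test_function A \<phi> D\<phi> \<longrightarrow>
        (LINT x:A|lebesgue. v x *\<^sub>R D\<phi> x) = - (LINT x:A|lebesgue. \<phi> x *\<^sub>R g x))"

definition W12 :: "'a::euclidean_space set \<Rightarrow> ('a \<Rightarrow> real) \<Rightarrow> ('a \<Rightarrow> 'a) \<Rightarrow> bool" where
  "W12 A v g \<longleftrightarrow>
     (\<lambda>x. indicator A x * v x) \<in> borel_measurable lebesgue \<and>
     (\<lambda>x. indicator A x *\<^sub>R g x) \<in> borel_measurable lebesgue \<and>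
     set_integrable lebesgue A (\<lambda>x. (v x)\<^sup>2) \<and>
     set_integrable lebesgue A (\<lambda>x. (norm (g x))\<^sup>2) \<and>
     weak_gradient A v g"

text \<open>Boundary trace, defined through averages over B(x,rho) intersected with A
  (for Lipschitz domains this agrees H^{n-1}-a.e. on the boundary with the trace).\<close>

definition boundary_trace :: "'a::euclidean_space set \<Rightarrow> ('a \<Rightarrow> real) \<Rightarrow> 'a \<Rightarrow> real" where
  "boundary_trace A v x =
     Lim (at_right 0) (\<lambda>\<rho>. (LINT y:(ball x \<rho> \<inter> A)|lebesgue. v y) / measure lebesgue (ball x \<rho> \<inter> A))"

definition robin_quotient :: "real \<Rightarrow> 'a::euclidean_space set \<Rightarrow> ('a \<Rightarrow> real) \<Rightarrow> ('a \<Rightarrow> 'a) \<Rightarrow> real" where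
  "robin_quotient \<beta> A v g =
     ((LINT x:A|lebesgue. (norm (g x))\<^sup>2)
       + \<beta> * enn2real (hausdorff_integral (DIM('a) - 1) (frontier A) (\<lambda>x. (boundary_trace A v x)\<^sup>2)))
     / (LINT x:A|lebesgue. (v x)\<^sup>2)"

definition robin_eigenvalue :: "real \<Rightarrow> 'a::euclidean_space set \<Rightarrow> real" where
  "robin_eigenvalue \<beta> A =
     Inf {robin_quotient \<beta> A v g | v g.
            W12 A v g \<and> \<not> (AE x in lebesgue. x \<in> A \<longrightarrow> v x = 0)}"

end

theory Submission
  imports Defs
begin

lemma lebesgue_affine_gen:
  fixes d :: "'a::euclidean_space" and c :: real
  assumes "c \<noteq> 0"
  shows "lebesgue = density (distr lebesgue lebesgue (\<lambda>x. d + c *\<^sub>R x)) (\<lambda>_. \<bar>c\<bar>^DIM('a))"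
    and "(\<lambda>x. d + c *\<^sub>R x) \<in> lebesgue \<rightarrow>\<^sub>M lebesgue"
  using lebesgue_affine_euclidean[where c="\<lambda>_::'a. c" and t=d] lebesgue_affine_measurable[where c="\<lambda>_::'a. c" and t=d] assms
  unfolding scaleR_scaleR[symmetric] scaleR_sum_right[symmetric] euclidean_representation prod_constant by simp_all

lemma nn_integral_affine_leb:
  fixes d :: "'a::euclidean_space" and c :: real
  assumes f[measurable]: "f \<in> borel_measurable lebesgue" and c: "c \<noteq> 0"
  shows "(\<integral>\<^sup>+x. f x \<partial>lebesgue) = ennreal (\<bar>c\<bar>^DIM('a)) * (\<integral>\<^sup>+x. f (d + c *\<^sub>R x) \<partial>lebesgue)"
proof -
  note M = lebesgue_affine_gen[OF c, of d]
  have "(\<integral>\<^sup>+x. f x \<partial>lebesgue) = (\<integral>\<^sup>+x. f x \<partial>density (distr lebesgue lebesgue (\<lambda>x. d + c *\<^sub>R x)) (\<lambda>_. \<bar>c\<bar>^DIM('a)))"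
    using M(1) by simp
  also have "\<dots> = \<integral>\<^sup>+ x. ennreal (\<bar>c\<bar>^DIM('a)) * f x \<partial>distr lebesgue lebesgue (\<lambda>x. d + c *\<^sub>R x)"
    by (subst nn_integral_density) auto
  also have "\<dots> = ennreal (\<bar>c\<bar>^DIM('a)) * integral\<^sup>N (distr lebesgue lebesgue (\<lambda>x. d + c *\<^sub>R x)) f"
    using f measurable_distr_eq1 nn_integral_cmult by blast
  also have "\<dots> = ennreal (\<bar>c\<bar>^DIM('a)) * (\<integral>\<^sup>+x. f (d + c *\<^sub>R x) \<partial>lebesgue)"
    using M(2) by (subst nn_integral_distr) (force+)
  finally show ?thesis .
qed

lemma integrable_affine_leb:
  fixes f :: "'a::euclidean_space \<Rightarrow> 'b::euclidean_space"
  assumes f: "integrable lebesgue f" and c: "c \<noteq> 0"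
  shows "integrable lebesgue (\<lambda>x. f (d + c *\<^sub>R x))"
proof -
  have m: "(\<lambda>x. norm (f x)) \<in> borel_measurable lebesgue"
    by (simp add: borel_measurable_integrable f)
  have "(\<integral>\<^sup>+x. ennreal (norm (f x)) \<partial>lebesgue) < \<infinity>" using f unfolding integrable_iff_bounded by simp
  then have "ennreal (\<bar>c\<bar>^DIM('a)) * (\<integral>\<^sup>+x. ennreal (norm (f (d + c *\<^sub>R x))) \<partial>lebesgue) < \<infinity>"
    using nn_integral_affine_leb[of "\<lambda>x. ennreal (norm (f x))" c d] m c by simp
  then have "(\<integral>\<^sup>+x. ennreal (norm (f (d + c *\<^sub>R x))) \<partial>lebesgue) < \<infinity>"
    using c by (auto simp: ennreal_mult_less_top)
  moreover have "(\<lambda>x. f (d + c *\<^sub>R x)) \<in> borel_measurable lebesgue"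
    using borel_measurable_affine[of f c d] f c by (simp add: borel_measurable_integrable)
  ultimately show ?thesis unfolding integrable_iff_bounded by simp
qed

lemma integrable_affine_leb_iff:
  fixes f :: "'a::euclidean_space \<Rightarrow> 'b::euclidean_space"
  assumes c: "c \<noteq> 0"
  shows "integrable lebesgue (\<lambda>x. f (d + c *\<^sub>R x)) \<longleftrightarrow> integrable lebesgue f"
proof
  assume "integrable lebesgue (\<lambda>x. f (d + c *\<^sub>R x))"
  from integrable_affine_leb[OF this, of "1/c" "- (1/c) *\<^sub>R d"] c
  have "integrable lebesgue (\<lambda>x. f (d + c *\<^sub>R ((1 / c) *\<^sub>R x - (1 / c) *\<^sub>R d)))" by simp
  moreover have "(\<lambda>x. f (d + c *\<^sub>R ((1 / c) *\<^sub>R x - (1 / c) *\<^sub>R d))) = f"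
    using c by (simp add: scaleR_diff_right)
  ultimately show "integrable lebesgue f" by simp
qed (use integrable_affine_leb c in auto)

lemma integral_affine_leb:
  fixes f :: "'a::euclidean_space \<Rightarrow> 'b::euclidean_space"
  assumes c: "c \<noteq> 0"
  shows "integral\<^sup>L lebesgue f = (\<bar>c\<bar>^DIM('a)) *\<^sub>R integral\<^sup>L lebesgue (\<lambda>x. f (d + c *\<^sub>R x))"
proof cases
  assume f: "integrable lebesgue f"
  note M = lebesgue_affine_gen[OF c, of d]
  have "integral\<^sup>L lebesgue f = integral\<^sup>L (density (distr lebesgue lebesgue (\<lambda>x. d + c *\<^sub>R x)) (\<lambda>_. \<bar>c\<bar>^DIM('a))) f"
    using M(1) by simp
  also have "\<dots> = (\<bar>c\<bar>^DIM('a)) *\<^sub>R integral\<^sup>L lebesgue (\<lambda>x. f (d + c *\<^sub>R x))"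
    using M(2) f by (simp add: integral_density integral_distr borel_measurable_integrable)
  finally show ?thesis .
next
  assume "\<not> integrable lebesgue f" with c show ?thesis
    by (simp add: integrable_affine_leb_iff not_integrable_integral_eq)
qed

lemma set_integral_affine_leb:
  fixes f :: "'a::euclidean_space \<Rightarrow> 'b::euclidean_space"
  assumes c: "c \<noteq> 0"
  shows "(LINT x:E|lebesgue. f x) = (\<bar>c\<bar>^DIM('a)) *\<^sub>R (LINT x:((\<lambda>x. d + c *\<^sub>R x) -` E)|lebesgue. f (d + c *\<^sub>R x))"
    and "set_integrable lebesgue ((\<lambda>x. d + c *\<^sub>R x) -` E) (\<lambda>x. f (d + c *\<^sub>R x)) \<longleftrightarrow> set_integrable lebesgue E f"
proof -
  have eq: "(\<lambda>x. indicator ((\<lambda>x. d + c *\<^sub>R x) -` E) x *\<^sub>R f (d + c *\<^sub>R x)) = (\<lambda>x. indicator E (d + c *\<^sub>R x) *\<^sub>R f (d + c *\<^sub>R x))"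
    by (auto simp: indicator_def)
  show "(LINT x:E|lebesgue. f x) = (\<bar>c\<bar>^DIM('a)) *\<^sub>R (LINT x:((\<lambda>x. d + c *\<^sub>R x) -` E)|lebesgue. f (d + c *\<^sub>R x))"
    and "set_integrable lebesgue ((\<lambda>x. d + c *\<^sub>R x) -` E) (\<lambda>x. f (d + c *\<^sub>R x)) \<longleftrightarrow> set_integrable lebesgue E f"
  unfolding set_lebesgue_integral_def set_integrable_def eq
  using integral_affine_leb[OF c, of "\<lambda>x. indicator E x *\<^sub>R f x" d]
    integrable_affine_leb_iff[OF c, of "\<lambda>x. indicator E x *\<^sub>R f x" d]
  by simp_all
qed

lemma bounded_aff_image:
  fixes C :: "'a::real_normed_vector set"
  assumes "bounded C"
  shows "bounded ((\<lambda>x. c *\<^sub>R x + d) ` C)"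
proof -
  have "bounded ((\<lambda>x. c *\<^sub>R x) ` C)" using bounded_scaleR_comp[of "\<lambda>x. x" C c] assms by simp
  moreover have "bounded ((\<lambda>x. d) ` C)" by (rule bounded_subset[of "{d}"]) auto
  ultimately show ?thesis by (rule bounded_plus_comp)
qed

lemma diameter_aff_image:
  fixes C :: "'a::real_normed_vector set"
  assumes "bounded C" "c > 0"
  shows "diameter ((\<lambda>x. c *\<^sub>R x + d) ` C) = c * diameter C"
proof (rule antisym)
  have dist: "dist (c *\<^sub>R x + d) (c *\<^sub>R y + d) = c * dist x y" for x y
    using assms(2) by (simp add: dist_norm scaleR_diff_right[symmetric])
  have B: "bounded ((\<lambda>x. c *\<^sub>R x + d) ` C)" using bounded_aff_image assms by blast
  show "diameter ((\<lambda>x. c *\<^sub>R x + d) ` C) \<le> c * diameter C"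
    apply (rule diameter_le)
    using assms diameter_ge_0[OF assms(1)] diameter_bounded_bound[OF assms(1)] dist
    by (auto simp: dist_norm[symmetric] mult_left_mono)
  have "diameter C \<le> diameter ((\<lambda>x. c *\<^sub>R x + d) ` C) / c"
  proof (rule diameter_le)
    show "C \<noteq> {} \<or> 0 \<le> diameter ((\<lambda>x. c *\<^sub>R x + d) ` C) / c"
      using assms diameter_ge_0[OF B] by simp
    fix x y assume xy: "x \<in> C" "y \<in> C"
    have "dist (c *\<^sub>R x + d) (c *\<^sub>R y + d) \<le> diameter ((\<lambda>x. c *\<^sub>R x + d) ` C)"
      by (rule diameter_bounded_bound[OF B]) (use xy in auto)
    then show "norm (x - y) \<le> diameter ((\<lambda>x. c *\<^sub>R x + d) ` C) / c"
      unfolding dist using assms by (simp add: field_simps dist_norm)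
  qed
  then show "c * diameter C \<le> diameter ((\<lambda>x. c *\<^sub>R x + d) ` C)"
    using assms by (simp add: field_simps)
qed

lemma haus_gauge_aff:
  fixes C :: "'a::euclidean_space set"
  assumes "bounded C" "c > 0"
  shows "haus_gauge s ((\<lambda>x. c *\<^sub>R x + d) ` C) = c ^ s * haus_gauge s C"
proof -
  have "(c * diameter C / 2) ^ s = c ^ s * (diameter C / 2) ^ s"
    by (metis power_mult_distrib times_divide_eq_right)
  then show ?thesis
    using diameter_aff_image[OF assms, of d] by (simp add: haus_gauge_def)
qed

lemma haus_gauge_nonneg:
  fixes C :: "'a::euclidean_space set"
  assumes "bounded C"
  shows "0 \<le> haus_gauge s C"
  using diameter_ge_0[OF assms] unit_ball_vol_nonneg[of "real s"]
  by (simp add: haus_gauge_def)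

lemma hausdorff_pre_aff_le:
  fixes E :: "'a::euclidean_space set"
  assumes c: "c > 0"
  shows "hausdorff_pre s (c * \<delta>) ((\<lambda>x. c *\<^sub>R x + d) ` E) \<le> ennreal (c ^ s) * hausdorff_pre s \<delta> E"
proof -
  define \<phi> where "\<phi> = (\<lambda>x::'a. c *\<^sub>R x + d)"
  define X where "X = {(\<Sum>i. ennreal (haus_gauge s (C i))) | C :: nat \<Rightarrow> 'a set.
            E \<subseteq> (\<Union>i. C i) \<and> (\<forall>i. bounded (C i) \<and> diameter (C i) \<le> \<delta>)}"
  define Y where "Y = {(\<Sum>i. ennreal (haus_gauge s (C i))) | C :: nat \<Rightarrow> 'a set.
            \<phi> ` E \<subseteq> (\<Union>i. C i) \<and> (\<forall>i. bounded (C i) \<and> diameter (C i) \<le> c * \<delta>)}"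
  have hX: "hausdorff_pre s \<delta> E = Inf X" unfolding hausdorff_pre_def X_def ..
  have hY: "hausdorff_pre s (c * \<delta>) (\<phi> ` E) = Inf Y" unfolding hausdorff_pre_def Y_def ..
  have 1: "Inf Y \<le> ennreal (c ^ s) * x" if "x \<in> X" for x
  proof -
    from that obtain C where x: "x = (\<Sum>i. ennreal (haus_gauge s (C i)))"
      and cov: "E \<subseteq> (\<Union>i. C i)" and bd: "\<And>i. bounded (C i)" and dm: "\<And>i. diameter (C i) \<le> \<delta>"
      unfolding X_def by blast
    define D where "D i = \<phi> ` C i" for i
    have "\<phi> ` E \<subseteq> (\<Union>i. D i)" using cov unfolding D_def by blast
    moreover have "bounded (D i)" for i unfolding D_def \<phi>_def using bounded_aff_image[OF bd] .
    moreover have "diameter (D i) \<le> c * \<delta>" for i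
      unfolding D_def \<phi>_def using diameter_aff_image[OF bd c] dm c by (simp add: mult_left_mono)
    ultimately have "(\<Sum>i. ennreal (haus_gauge s (D i))) \<in> Y" unfolding Y_def by blast
    moreover have "(\<Sum>i. ennreal (haus_gauge s (D i))) = ennreal (c ^ s) * x"
      unfolding x D_def \<phi>_def haus_gauge_aff[OF bd c]
      using c by (simp add: ennreal_mult')
    ultimately show ?thesis by (metis Inf_lower)
  qed
  have 2: "ennreal ((1/c) ^ s) * Inf Y \<le> x" if "x \<in> X" for x
  proof -
    have "ennreal ((1/c) ^ s) * Inf Y \<le> ennreal ((1/c) ^ s) * (ennreal (c ^ s) * x)"
      using 1[OF that] by (rule mult_left_mono) simp
    also have "\<dots> = x" using c
      by (simp add: mult.assoc[symmetric] ennreal_mult'[symmetric] power_mult_distrib[symmetric])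
    finally show ?thesis .
  qed
  have "ennreal ((1/c) ^ s) * Inf Y \<le> Inf X" using 2 by (rule Inf_greatest)
  then have "ennreal (c ^ s) * (ennreal ((1/c) ^ s) * Inf Y) \<le> ennreal (c ^ s) * Inf X"
    by (rule mult_left_mono) simp
  moreover have "ennreal (c ^ s) * (ennreal ((1/c) ^ s) * Inf Y) = Inf Y" using c
    by (simp add: mult.assoc[symmetric] ennreal_mult'[symmetric] power_mult_distrib[symmetric])
  ultimately show ?thesis using hX hY \<phi>_def by simp
qed

lemma hausdorff_pre_aff:
  fixes E :: "'a::euclidean_space set"
  assumes c: "c > 0"
  shows "hausdorff_pre s (c * \<delta>) ((\<lambda>x. c *\<^sub>R x + d) ` E) = ennreal (c ^ s) * hausdorff_pre s \<delta> E"
proof (rule antisym)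
  show "hausdorff_pre s (c * \<delta>) ((\<lambda>x. c *\<^sub>R x + d) ` E) \<le> ennreal (c ^ s) * hausdorff_pre s \<delta> E"
    using hausdorff_pre_aff_le[OF c] .
  have inv: "(\<lambda>x. (1/c) *\<^sub>R x + (- (1/c) *\<^sub>R d)) ` (\<lambda>x. c *\<^sub>R x + d) ` E = E"
    using c by (force simp: image_image scaleR_add_right)
  have "hausdorff_pre s ((1/c) * (c * \<delta>)) ((\<lambda>x. (1/c) *\<^sub>R x + (- (1/c) *\<^sub>R d)) ` (\<lambda>x. c *\<^sub>R x + d) ` E)
     \<le> ennreal ((1/c) ^ s) * hausdorff_pre s (c * \<delta>) ((\<lambda>x. c *\<^sub>R x + d) ` E)"
    by (rule hausdorff_pre_aff_le) (use c in simp)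
  moreover have "(1/c) * (c * \<delta>) = \<delta>" using c by simp
  ultimately have "hausdorff_pre s \<delta> E \<le> ennreal ((1/c) ^ s) * hausdorff_pre s (c * \<delta>) ((\<lambda>x. c *\<^sub>R x + d) ` E)"
    unfolding inv by simp
  then have "ennreal (c ^ s) * hausdorff_pre s \<delta> E \<le> ennreal (c ^ s) * (ennreal ((1/c) ^ s) * hausdorff_pre s (c * \<delta>) ((\<lambda>x. c *\<^sub>R x + d) ` E))"
    by (rule mult_left_mono) simp
  also have "\<dots> = hausdorff_pre s (c * \<delta>) ((\<lambda>x. c *\<^sub>R x + d) ` E)" using c
    by (simp add: mult.assoc[symmetric] ennreal_mult'[symmetric] power_mult_distrib[symmetric])
  finally show "ennreal (c ^ s) * hausdorff_pre s \<delta> E \<le> hausdorff_pre s (c * \<delta>) ((\<lambda>x. c *\<^sub>R x + d) ` E)" .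
qed

lemma hausdorff_aff:
  fixes E :: "'a::euclidean_space set"
  assumes c: "c > 0"
  shows "hausdorff s ((\<lambda>x. c *\<^sub>R x + d) ` E) = ennreal (c ^ s) * hausdorff s E"
proof -
  have img: "(\<lambda>\<delta>. c * \<delta>) ` {0<..} = {0::real<..}"
  proof (intro set_eqI iffI)
    fix x :: real assume "x \<in> {0<..}"
    then show "x \<in> (\<lambda>\<delta>. c * \<delta>) ` {0<..}"
      using c by (intro image_eqI[of _ _ "x/c"]) auto
  qed (use c in auto)
  have "hausdorff s ((\<lambda>x. c *\<^sub>R x + d) ` E) = (SUP \<delta>\<in>(\<lambda>\<delta>. c * \<delta>) ` {0<..}. hausdorff_pre s \<delta> ((\<lambda>x. c *\<^sub>R x + d) ` E))"
    unfolding hausdorff_def img ..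
  also have "\<dots> = (SUP \<delta>\<in>{0<..}. hausdorff_pre s (c * \<delta>) ((\<lambda>x. c *\<^sub>R x + d) ` E))"
    by (simp add: image_comp)
  also have "\<dots> = (SUP \<delta>\<in>{0<..}. ennreal (c ^ s) * hausdorff_pre s \<delta> E)"
    by (simp only: hausdorff_pre_aff[OF c])
  also have "\<dots> = ennreal (c ^ s) * hausdorff s E"
    unfolding hausdorff_def by (simp add: SUP_mult_left_ennreal)
  finally show ?thesis .
qed

lemma hausdorff_pre_mono:
  fixes E F :: "'a::euclidean_space set"
  assumes "E \<subseteq> F"
  shows "hausdorff_pre s \<delta> E \<le> hausdorff_pre s \<delta> F"
  unfolding hausdorff_pre_def
  by (rule Inf_superset_mono) (use assms in blast)

lemma hausdorff_mono:
  fixes E F :: "'a::euclidean_space set"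
  assumes "E \<subseteq> F"
  shows "hausdorff s E \<le> hausdorff s F"
  unfolding hausdorff_def
  by (rule SUP_mono) (use hausdorff_pre_mono[OF assms] in blast)

lemma antimono_borel_ennreal:
  fixes h :: "real \<Rightarrow> ennreal"
  assumes "\<And>x y. x \<le> y \<Longrightarrow> h y \<le> h x"
  shows "h \<in> borel_measurable lborel"
proof (rule borel_measurableI_greater)
  fix y
  have "is_interval {x. y < h x}"
    unfolding is_interval_1
    using assms by (auto intro: less_le_trans)
  then have "{x. y < h x} \<in> sets borel" by (rule real_interval_borel_measurable)
  then show "{x \<in> space lborel. y < h x} \<in> sets lborel" by simp
qed

lemma hausdorff_integral_aff:
  fixes F F' :: "'a::euclidean_space set"
  assumes c: "c > 0"
    and sets: "\<And>\<tau>. {x\<in>F'. f' x > \<tau>} = (\<lambda>x. c *\<^sub>R x + d) ` {x\<in>F. f x > \<tau>}"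
  shows "hausdorff_integral s F' f' = ennreal (c ^ s) * hausdorff_integral s F f"
proof -
  define h where "h \<tau> = hausdorff s {x\<in>F. f x > \<tau>}" for \<tau>
  have hm: "h \<in> borel_measurable lborel"
    by (rule antimono_borel_ennreal) (auto simp: h_def intro!: hausdorff_mono)
  have "hausdorff_integral s F' f' = (\<integral>\<^sup>+ t. ennreal (c ^ s) * (h t * indicator {0<..} t) \<partial>lborel)"
    unfolding hausdorff_integral_def sets hausdorff_aff[OF c] h_def
    by (simp add: mult.assoc)
  also have "\<dots> = ennreal (c ^ s) * (\<integral>\<^sup>+ t. h t * indicator {0<..} t \<partial>lborel)"
    by (rule nn_integral_cmult) (use hm in measurable)
  also have "\<dots> = ennreal (c ^ s) * hausdorff_integral s F f"
    unfolding hausdorff_integral_def h_def ..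
  finally show ?thesis .
qed

lemma tf_props:
  assumes "test_function A \<phi> D\<phi>"
  shows "\<And>x. (\<phi> has_derivative (\<lambda>h. D\<phi> x \<bullet> h)) (at x)" "continuous_on UNIV D\<phi>"
    "compact (closure {x. \<phi> x \<noteq> 0})" "closure {x. \<phi> x \<noteq> 0} \<subseteq> A"
  using assms unfolding test_function_def by blast+

lemma test_function_zero_outside:
  assumes "test_function A \<phi> D\<phi>" "x \<notin> closure {x. \<phi> x \<noteq> 0}"
  shows "\<phi> x = 0" "D\<phi> x = 0"
proof -
  have cl: "y \<in> closure {x. \<phi> x \<noteq> 0}" if "\<phi> y \<noteq> 0" for y
    by (rule subsetD[OF closure_subset]) (simp add: that)
  show "\<phi> x = 0"
  proof (rule ccontr)
    assume "\<phi> x \<noteq> 0"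
    from cl[OF this] assms(2) show False by contradiction
  qed
  have d: "(\<phi> has_derivative (\<lambda>h. D\<phi> x \<bullet> h)) (at x)" using tf_props(1)[OF assms(1)] .
  have "((\<lambda>_. 0::real) has_derivative (\<lambda>h. 0)) (at x)" by (rule has_derivative_const)
  moreover have "open (- closure {x. \<phi> x \<noteq> 0})" by (rule open_Compl, rule closed_closure)
  moreover have "x \<in> - closure {x. \<phi> x \<noteq> 0}" using assms(2) by (simp only: Compl_iff not_False_eq_True)
  moreover have "(0::real) = \<phi> y" if "y \<in> - closure {x. \<phi> x \<noteq> 0}" for y
  proof (rule ccontr)
    assume "0 \<noteq> \<phi> y"
    then have "\<phi> y \<noteq> 0" by (rule not_sym)
    from cl[OF this] ComplD[OF that] show False by contradiction
  qed
  ultimately have "(\<phi> has_derivative (\<lambda>h. 0)) (at x)"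
    by (rule has_derivative_transform_within_open)
  from has_derivative_unique[OF d this] have "(\<lambda>h. D\<phi> x \<bullet> h) = (\<lambda>h. 0)" .
  then have "(\<lambda>h. D\<phi> x \<bullet> h) (D\<phi> x) = (\<lambda>h. 0::real) (D\<phi> x)" by (rule fun_cong)
  then have "D\<phi> x \<bullet> D\<phi> x = 0" by (simp only:)
  then show "D\<phi> x = 0" by (simp only: inner_eq_zero_iff)
qed

lemma test_function_integral_grad:
  fixes \<phi> :: "'a::euclidean_space \<Rightarrow> real"
  assumes tf: "test_function A \<phi> D\<phi>"
  shows "(D\<phi> has_integral 0) UNIV"
proof -
  define K where "K = closure {x. \<phi> x \<noteq> 0}"
  have cK: "compact K" using tf_props(3)[OF tf] unfolding K_def .
  have deriv: "\<And>x. (\<phi> has_derivative (\<lambda>h. D\<phi> x \<bullet> h)) (at x)" and cD: "continuous_on UNIV D\<phi>"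
    using tf_props(1,2)[OF tf] by blast+
  have cphi: "continuous_on UNIV \<phi>"
    using deriv by (meson continuous_at_imp_continuous_on has_derivative_continuous)
  have z: "\<phi> x = 0" "D\<phi> x = 0" if "x \<notin> K" for x
    using test_function_zero_outside[OF tf, of x] that unfolding K_def by blast+
  obtain a where a: "K \<subseteq> cbox (-a) a" using bounded_subset_cbox_symmetric[OF compact_imp_bounded[OF cK]] by blast
  define B where "B = cbox (-(a + One)) (a + (One::'a))"
  define I0 where "I0 = integral (cbox (-a) a) \<phi>"
  have I0: "(\<phi> has_integral I0) (cbox (-a) a)"
    unfolding I0_def by (rule integrable_integral, rule integrable_continuous, rule continuous_on_subset[OF cphi]) auto
  have sup: "(\<phi> has_integral I0) T" if "cbox (-a) a \<subseteq> T" for T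
    by (rule has_integral_on_superset[OF I0 _ that]) (use z a in blast)
  have "x \<in> B" if "x \<in> cbox (-a) a" for x
    using that unfolding B_def by (auto simp: mem_box inner_simps)
  then have KB: "K \<subseteq> B" using a by blast
  have "((\<lambda>x. D\<phi> x \<bullet> e) has_integral 0) UNIV" if e: "e \<in> Basis" for e
  proof -
    define U where "U = ball (0::real) 1"
    define F where "F s = integral B (\<lambda>x. \<phi> (s *\<^sub>R e + x))" for s
    have Fc: "F s = I0" if "s \<in> U" for s
    proof -
      have "cbox (-a) a \<subseteq> cbox (-(a + One) + s *\<^sub>R e) (a + One + s *\<^sub>R e)"
      proof
        fix x assume x: "x \<in> cbox (-a) a"
        show "x \<in> cbox (-(a + One) + s *\<^sub>R e) (a + One + s *\<^sub>R e)"
          unfolding mem_box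
        proof (intro ballI conjI)
          fix i :: 'a assume i: "i \<in> Basis"
          have ei: "\<bar>e \<bullet> i\<bar> \<le> 1" using e i by (auto simp: inner_Basis)
          have s1: "\<bar>s\<bar> < 1" using \<open>s \<in> U\<close> by (simp add: U_def)
          have "\<bar>s * (e \<bullet> i)\<bar> \<le> 1" unfolding abs_mult
            using ei s1 by (meson abs_ge_zero less_imp_le mult_le_one)
          then have b: "-1 \<le> s * (e \<bullet> i)" "s * (e \<bullet> i) \<le> 1" by linarith+
          have xb: "- (a \<bullet> i) \<le> x \<bullet> i" "x \<bullet> i \<le> a \<bullet> i" using x i by (auto simp: mem_box)
          have o: "One \<bullet> i = (1::real)" using i by simp
          have 1: "(-(a + One) + s *\<^sub>R e) \<bullet> i = - (a \<bullet> i) - 1 + s * (e \<bullet> i)" by (simp add: inner_add_left inner_diff_left inner_minus_left o)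
          have 2: "(a + One + s *\<^sub>R e) \<bullet> i = a \<bullet> i + 1 + s * (e \<bullet> i)" by (simp add: inner_add_left o)
          show "(-(a + One) + s *\<^sub>R e) \<bullet> i \<le> x \<bullet> i" "x \<bullet> i \<le> (a + One + s *\<^sub>R e) \<bullet> i"
            unfolding 1 2 using b xb by linarith+
        qed
      qed
      then have "(\<phi> has_integral I0) (cbox (-(a + One) + s *\<^sub>R e) (a + One + s *\<^sub>R e))" by (rule sup)
      then have "((\<phi> \<circ> (+) (s *\<^sub>R e)) has_integral I0) B"
        unfolding B_def by (subst has_integral_shift_cbox_iff)
      then show ?thesis unfolding F_def by (simp add: o_def integral_unique)
    qed
    have lr: "(F has_field_derivative integral B (\<lambda>x. D\<phi> (0 *\<^sub>R e + x) \<bullet> e)) (at 0 within U)"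
      unfolding F_def B_def
    proof (rule leibniz_rule_field_derivative)
      fix s :: real and x :: 'a
      have "((\<lambda>s. \<phi> (s *\<^sub>R e + x)) has_derivative (\<lambda>h. D\<phi> (s *\<^sub>R e + x) \<bullet> (h *\<^sub>R e))) (at s)"
        by (rule has_derivative_compose[OF _ deriv]) (auto intro!: derivative_eq_intros)
      moreover have "(\<lambda>h. D\<phi> (s *\<^sub>R e + x) \<bullet> (h *\<^sub>R e)) = (*) (D\<phi> (s *\<^sub>R e + x) \<bullet> e)"
        by (auto simp: fun_eq_iff)
      ultimately show "((\<lambda>s. \<phi> (s *\<^sub>R e + x)) has_field_derivative D\<phi> (s *\<^sub>R e + x) \<bullet> e) (at s within U)"
        unfolding has_field_derivative_def by (metis has_derivative_at_withinI)
    next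
      fix s :: real
      have "continuous_on (cbox (- (a + One)) (a + One)) (\<lambda>x. \<phi> (s *\<^sub>R e + x))"
        by (rule continuous_on_compose2[OF cphi]) (auto intro!: continuous_intros)
      then show "(\<lambda>x. \<phi> (s *\<^sub>R e + x)) integrable_on cbox (- (a + One)) (a + One)"
        by (rule integrable_continuous)
    next
      have "continuous_on (U \<times> cbox (- (a + One)) (a + One)) (\<lambda>p. D\<phi> (fst p *\<^sub>R e + snd p))"
        by (rule continuous_on_compose2[OF cD]) (auto intro!: continuous_intros)
      then show "continuous_on (U \<times> cbox (- (a + One)) (a + One)) (\<lambda>(s, x). D\<phi> (s *\<^sub>R e + x) \<bullet> e)"
        unfolding split_beta by (intro continuous_on_inner continuous_on_const)
    qed (simp_all add: U_def)
    then have lr': "(F has_field_derivative integral B (\<lambda>x. D\<phi> x \<bullet> e)) (at 0)"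
      by (simp add: U_def at_within_open[of 0 "ball 0 1"])
    have "((\<lambda>_. I0) has_field_derivative 0) (at (0::real))" by simp
    then have "(F has_field_derivative 0) (at 0)"
      by (rule has_field_derivative_transform_within_open[of _ _ _ U]) (auto simp: U_def Fc)
    from DERIV_unique[OF lr' this] have i0: "integral B (\<lambda>x. D\<phi> x \<bullet> e) = 0" .
    have "((\<lambda>x. D\<phi> x \<bullet> e) has_integral 0) B"
      unfolding B_def i0[symmetric, unfolded B_def]
      by (rule integrable_integral, rule integrable_continuous)
         (intro continuous_on_inner continuous_on_const continuous_on_subset[OF cD], simp)
    then show ?thesis
      by (rule has_integral_on_superset) (use z(2) KB in \<open>metis subsetD inner_zero_left\<close>, simp)
  qed
  then show ?thesis
    by (subst has_integral_componentwise_iff) simp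
qed

lemma test_function_lebesgue_integral_grad:
  fixes \<phi> :: "'a::euclidean_space \<Rightarrow> real"
  assumes tf: "test_function A \<phi> D\<phi>"
  shows "integrable lebesgue D\<phi>" "integral\<^sup>L lebesgue D\<phi> = 0"
proof -
  define K where "K = closure {x. \<phi> x \<noteq> 0}"
  have cK: "compact K" using tf_props(3)[OF tf] unfolding K_def .
  have cD: "continuous_on UNIV D\<phi>"
    using tf_props(2)[OF tf] .
  have z: "D\<phi> x = 0" if "x \<notin> K" for x
    using test_function_zero_outside(2)[OF tf, of x] that unfolding K_def by blast
  have eq: "(\<lambda>x. indicator K x *\<^sub>R D\<phi> x) = D\<phi>"
    by (rule ext) (simp add: indicator_def z)
  have "integrable lborel (\<lambda>x. indicator K x *\<^sub>R D\<phi> x)"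
    by (rule borel_integrable_compact[OF cK]) (rule continuous_on_subset[OF cD], simp)
  then have il0: "integrable lborel D\<phi>" by (simp only: eq)
  have m: "D\<phi> \<in> lborel \<rightarrow>\<^sub>M borel"
    using borel_measurable_continuous_onI[OF cD] by (simp only: measurable_lborel2)
  show il: "integrable lebesgue D\<phi>"
    by (subst integrable_completion[OF m]) (rule il0)
  show "integral\<^sup>L lebesgue D\<phi> = 0"
    using has_integral_unique[OF has_integral_integral_lebesgue[OF il] test_function_integral_grad[OF tf]] .
qed

lemma weak_gradient_const:
  fixes A :: "'a::euclidean_space set"
  shows "weak_gradient A (\<lambda>_. 1) (\<lambda>_. 0)"
  unfolding weak_gradient_def
proof (intro allI impI)
  fix \<phi> D\<phi> assume tf: "test_function A \<phi> D\<phi>"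
  have z: "D\<phi> x = 0" if "x \<notin> A" for x
    using test_function_zero_outside(2)[OF tf, of x] that tf_props(4)[OF tf] by blast
  have "(\<lambda>x. indicator A x *\<^sub>R (1::real) *\<^sub>R D\<phi> x) = D\<phi>"
    using z by (auto simp: fun_eq_iff indicator_def)
  then show "(LINT x:A|lebesgue. (1::real) *\<^sub>R D\<phi> x) = - (LINT x:A|lebesgue. \<phi> x *\<^sub>R (0::'a))"
    unfolding set_lebesgue_integral_def
    using test_function_lebesgue_integral_grad(2)[OF tf] by simp
qed

lemma aff_vimage_ball:
  fixes d x0 :: "'a::euclidean_space"
  assumes t: "t > 0"
  shows "(\<lambda>x. d + t *\<^sub>R x) -` ball (d + t *\<^sub>R x0) (t * \<rho>) = ball x0 \<rho>"
proof -
  have "dist (d + t *\<^sub>R x0) (d + t *\<^sub>R x) = t * dist x0 x" for x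
    using t by (simp add: dist_norm scaleR_diff_right[symmetric])
  then show ?thesis using t by (auto simp: mem_ball)
qed

lemma aff_vimage_sphere:
  fixes d x0 :: "'a::euclidean_space"
  assumes t: "t > 0"
  shows "(\<lambda>x. d + t *\<^sub>R x) -` sphere (d + t *\<^sub>R x0) (t * \<rho>) = sphere x0 \<rho>"
proof -
  have "dist (d + t *\<^sub>R x0) (d + t *\<^sub>R x) = t * dist x0 x" for x
    using t by (simp add: dist_norm scaleR_diff_right[symmetric])
  then show ?thesis using t by auto
qed

lemma aff_inv_image:
  fixes d :: "'a::euclidean_space"
  assumes t: "t > 0"
  shows "(\<lambda>y. (1/t) *\<^sub>R y + (- (1/t) *\<^sub>R d)) ` Y = (\<lambda>x. d + t *\<^sub>R x) -` Y"
proof (intro set_eqI iffI)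
  fix x assume "x \<in> (\<lambda>y. (1/t) *\<^sub>R y + (- (1/t) *\<^sub>R d)) ` Y"
  then obtain y where y: "y \<in> Y" "x = (1/t) *\<^sub>R y + (- (1/t) *\<^sub>R d)" by blast
  have "d + t *\<^sub>R x = y" using t unfolding y(2) by (simp add: scaleR_add_right scaleR_diff_right)
  then show "x \<in> (\<lambda>x. d + t *\<^sub>R x) -` Y" using y(1) by simp
next
  fix x assume "x \<in> (\<lambda>x. d + t *\<^sub>R x) -` Y"
  then have "d + t *\<^sub>R x \<in> Y" by simp
  moreover have "x = (1/t) *\<^sub>R (d + t *\<^sub>R x) + (- (1/t) *\<^sub>R d)" using t by (simp add: scaleR_add_right)
  ultimately show "x \<in> (\<lambda>y. (1/t) *\<^sub>R y + (- (1/t) *\<^sub>R d)) ` Y" by (rule rev_image_eqI)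
qed

lemma Lim_at_right_scale:
  fixes f :: "real \<Rightarrow> real"
  assumes t: "t > 0"
  shows "Lim (at_right 0) (\<lambda>\<rho>. f (t * \<rho>)) = Lim (at_right 0) f"
proof -
  have "((\<lambda>\<rho>. f (t * \<rho>)) \<longlongrightarrow> L) (at_right 0) \<longleftrightarrow> (f \<longlongrightarrow> L) (at_right 0)" for L
  proof -
    have "(f \<longlongrightarrow> L) (at_right 0) \<longleftrightarrow> (f \<longlongrightarrow> L) (filtermap (times t) (at_right 0))"
      using filtermap_times_pos_at_right[OF t, of 0] by simp
    also have "\<dots> \<longleftrightarrow> ((\<lambda>\<rho>. f (t * \<rho>)) \<longlongrightarrow> L) (at_right 0)"
      by (simp add: filterlim_filtermap)
    finally show ?thesis by simp
  qed
  then have "(\<lambda>L. ((\<lambda>\<rho>. f (t * \<rho>)) \<longlongrightarrow> L) (at_right 0)) = (\<lambda>L. (f \<longlongrightarrow> L) (at_right 0))"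
    by (rule ext)
  then show ?thesis unfolding Topological_Spaces.Lim_def by (rule arg_cong[where f=The])
qed

lemma trace_aff:
  fixes d a x :: "'a::euclidean_space"
  assumes t: "t > 0"
  shows "boundary_trace (ball a r) (\<lambda>x. v (d + t *\<^sub>R x)) x = boundary_trace (ball (d + t *\<^sub>R a) (t * r)) v (d + t *\<^sub>R x)"
proof -
  define T where "T = (\<lambda>x::'a. d + t *\<^sub>R x)"
  define Av where "Av \<rho> = (LINT y:(ball (T x) \<rho> \<inter> ball (T a) (t * r))|lebesgue. v y) / measure lebesgue (ball (T x) \<rho> \<inter> ball (T a) (t * r))" for \<rho>
  have eq: "(LINT y:(ball x \<rho> \<inter> ball a r)|lebesgue. v (T y)) / measure lebesgue (ball x \<rho> \<inter> ball a r) = Av (t * \<rho>)" for \<rho>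
  proof -
    define Q where "Q = ball (T x) (t * \<rho>) \<inter> ball (T a) (t * r)"
    have P: "T -` Q = ball x \<rho> \<inter> ball a r"
      unfolding Q_def T_def vimage_Int by (simp only: aff_vimage_ball[OF t])
    have I: "(LINT y:Q|lebesgue. v y) = (t ^ DIM('a)) *\<^sub>R (LINT y:(T -` Q)|lebesgue. v (T y))"
      using set_integral_affine_leb(1)[of t Q v d] t unfolding T_def by simp
    have M: "measure lebesgue (T -` Q) = (1/t) ^ DIM('a) * measure lebesgue Q"
      unfolding T_def aff_inv_image[OF t, symmetric]
      using measure_lebesgue_affine[of "1/t" "- (1/t) *\<^sub>R d" Q] t by simp
    have tn: "t ^ DIM('a) \<noteq> 0" using t by simp
    show ?thesis
      unfolding Av_def Q_def[symmetric] P[symmetric] M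
      using I tn by (simp add: field_simps power_one_over)
  qed
  have "boundary_trace (ball a r) (\<lambda>x. v (T x)) x = Lim (at_right 0) (\<lambda>\<rho>. Av (t * \<rho>))"
    unfolding boundary_trace_def eq ..
  also have "\<dots> = Lim (at_right 0) Av" by (rule Lim_at_right_scale[OF t])
  also have "\<dots> = boundary_trace (ball (T a) (t * r)) v (T x)"
    unfolding boundary_trace_def Av_def ..
  finally show ?thesis unfolding T_def .
qed

lemma ball_aff_integral:
  fixes d a :: "'a::euclidean_space" and f :: "'a \<Rightarrow> 'b::euclidean_space"
  assumes t: "t > 0"
  shows "(LINT x:ball a r|lebesgue. f (d + t *\<^sub>R x)) = (1 / t ^ DIM('a)) *\<^sub>R (LINT y:ball (d + t *\<^sub>R a) (t * r)|lebesgue. f y)"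
    and "set_integrable lebesgue (ball a r) (\<lambda>x. f (d + t *\<^sub>R x)) \<longleftrightarrow> set_integrable lebesgue (ball (d + t *\<^sub>R a) (t * r)) f"
proof -
  have tn: "t ^ DIM('a) \<noteq> 0" using t by simp
  have t0: "t \<noteq> 0" using t by simp
  note L = set_integral_affine_leb[OF t0, where E="ball (d + t *\<^sub>R a) (t * r)" and f=f and d=d, unfolded aff_vimage_ball[OF t]]
  show "(LINT x:ball a r|lebesgue. f (d + t *\<^sub>R x)) = (1 / t ^ DIM('a)) *\<^sub>R (LINT y:ball (d + t *\<^sub>R a) (t * r)|lebesgue. f y)"
    using L(1) t tn by simp
  show "set_integrable lebesgue (ball a r) (\<lambda>x. f (d + t *\<^sub>R x)) \<longleftrightarrow> set_integrable lebesgue (ball (d + t *\<^sub>R a) (t * r)) f"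
    using L(2) .
qed

lemma W12_transfer:
  fixes a d :: "'a::euclidean_space"
  assumes t: "t > 0" and W: "W12 (ball (d + t *\<^sub>R a) (t * r)) v g"
  shows "W12 (ball a r) (\<lambda>x. v (d + t *\<^sub>R x)) (\<lambda>x. t *\<^sub>R g (d + t *\<^sub>R x))"
proof -
  define E where "E = ball (d + t *\<^sub>R a) (t * r)"
  define T where "T = (\<lambda>x::'a. d + t *\<^sub>R x)"
  define S where "S = (\<lambda>y::'a. (1/t) *\<^sub>R y + (- (1/t) *\<^sub>R d))"
  have t0: "t \<noteq> 0" using t by simp
  have ST: "S (T x) = x" for x unfolding S_def T_def using t0 by (simp add: scaleR_add_right)
  have TS: "T (S y) = y" for y unfolding S_def T_def using t0 by (simp add: scaleR_add_right scaleR_diff_right)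
  have pre: "T -` E = ball a r" unfolding T_def E_def by (rule aff_vimage_ball[OF t])
  have memE: "T x \<in> E \<longleftrightarrow> x \<in> ball a r" for x
  proof -
    have "T x \<in> E \<longleftrightarrow> x \<in> T -` E" by simp
    then show ?thesis unfolding pre .
  qed
  have ind: "indicator E (T x) = (indicator (ball a r) x :: real)" for x
    by (simp add: indicator_def memE)
  have Tm: "T \<in> lebesgue \<rightarrow>\<^sub>M lebesgue" unfolding T_def by (rule lebesgue_affine_gen(2)[OF t0])
  have m1: "(\<lambda>x. indicator E x * v x) \<in> borel_measurable lebesgue"
    and m2: "(\<lambda>x. indicator E x *\<^sub>R g x) \<in> borel_measurable lebesgue"
    and i1: "set_integrable lebesgue E (\<lambda>x. (v x)\<^sup>2)"
    and i2: "set_integrable lebesgue E (\<lambda>x. (norm (g x))\<^sup>2)"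
    and wg: "weak_gradient E v g"
    using W unfolding W12_def E_def by blast+
  have "(\<lambda>x. indicator (ball a r) x * v (T x)) = (\<lambda>x. (\<lambda>y. indicator E y * v y) (T x))"
    by (simp add: ind)
  moreover have "(\<lambda>x. (\<lambda>y. indicator E y * v y) (T x)) \<in> borel_measurable lebesgue"
    by (rule measurable_compose[OF Tm m1])
  ultimately have M1: "(\<lambda>x. indicator (ball a r) x * v (T x)) \<in> borel_measurable lebesgue" by simp
  have "(\<lambda>x. indicator (ball a r) x *\<^sub>R (t *\<^sub>R g (T x))) = (\<lambda>x. (\<lambda>y. t *\<^sub>R (indicator E y *\<^sub>R g y)) (T x))"
    by (simp add: ind mult.commute)
  moreover have "(\<lambda>y. t *\<^sub>R (indicator E y *\<^sub>R g y)) \<in> borel_measurable lebesgue"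
    by (rule borel_measurable_scaleR[OF borel_measurable_const m2])
  then have "(\<lambda>x. (\<lambda>y. t *\<^sub>R (indicator E y *\<^sub>R g y)) (T x)) \<in> borel_measurable lebesgue"
    by (rule measurable_compose[OF Tm])
  ultimately have M2: "(\<lambda>x. indicator (ball a r) x *\<^sub>R (t *\<^sub>R g (T x))) \<in> borel_measurable lebesgue" by simp
  have I1: "set_integrable lebesgue (ball a r) (\<lambda>x. (v (T x))\<^sup>2)"
    using ball_aff_integral(2)[OF t, of a r "\<lambda>y. (v y)\<^sup>2" d] i1 unfolding E_def T_def by simp
  have "set_integrable lebesgue (ball a r) (\<lambda>x. (norm (g (T x)))\<^sup>2)"
    using ball_aff_integral(2)[OF t, of a r "\<lambda>y. (norm (g y))\<^sup>2" d] i2 unfolding E_def T_def by simp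
  then have "set_integrable lebesgue (ball a r) (\<lambda>x. t\<^sup>2 * (norm (g (T x)))\<^sup>2)"
    by (rule set_integrable_mult_right)
  moreover have "(\<lambda>x. t\<^sup>2 * (norm (g (T x)))\<^sup>2) = (\<lambda>x. (norm (t *\<^sub>R g (T x)))\<^sup>2)"
    using t by (simp add: power_mult_distrib)
  ultimately have I2: "set_integrable lebesgue (ball a r) (\<lambda>x. (norm (t *\<^sub>R g (T x)))\<^sup>2)" by simp
  have WG: "weak_gradient (ball a r) (\<lambda>x. v (T x)) (\<lambda>x. t *\<^sub>R g (T x))"
    unfolding weak_gradient_def
  proof (intro allI impI)
    fix \<phi> D\<phi> assume tf: "test_function (ball a r) \<phi> D\<phi>"
    define \<psi> where "\<psi> = (\<lambda>y. \<phi> (S y))"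
    define D\<psi> where "D\<psi> = (\<lambda>y. (1/t) *\<^sub>R D\<phi> (S y))"
    define K where "K = closure {x. \<phi> x \<noteq> 0}"
    have cK: "compact K" unfolding K_def by (rule tf_props(3)[OF tf])
    have KA: "K \<subseteq> ball a r" unfolding K_def by (rule tf_props(4)[OF tf])
    have cD: "continuous_on UNIV D\<phi>" by (rule tf_props(2)[OF tf])
    have tfpsi: "test_function E \<psi> D\<psi>"
      unfolding test_function_def
    proof (intro conjI allI)
      fix y
      have Sd: "(S has_derivative (\<lambda>h. (1/t) *\<^sub>R h)) (at y)"
        unfolding S_def by (auto intro!: derivative_eq_intros)
      have "((\<lambda>x. \<phi> (S x)) has_derivative (\<lambda>h. D\<phi> (S y) \<bullet> ((1/t) *\<^sub>R h))) (at y)"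
        by (rule has_derivative_compose[OF Sd tf_props(1)[OF tf]])
      moreover have "(\<lambda>h. D\<phi> (S y) \<bullet> ((1/t) *\<^sub>R h)) = (\<lambda>h. D\<psi> y \<bullet> h)"
        unfolding D\<psi>_def by (simp add: inner_scaleR_left inner_scaleR_right)
      ultimately show "(\<psi> has_derivative (\<lambda>h. D\<psi> y \<bullet> h)) (at y)"
        unfolding \<psi>_def by simp
    next
      have "continuous_on UNIV (\<lambda>y. D\<phi> (S y))"
        by (rule continuous_on_compose2[OF cD]) (auto simp: S_def intro!: continuous_intros)
      then show "continuous_on UNIV D\<psi>"
        unfolding D\<psi>_def by (intro continuous_on_scaleR continuous_on_const)
    next
      have cT: "continuous_on K T" unfolding T_def by (intro continuous_intros)
      have cTK: "compact (T ` K)" by (rule compact_continuous_image[OF cT cK])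
      have sub: "{y. \<psi> y \<noteq> 0} \<subseteq> T ` K"
      proof
        fix y assume "y \<in> {y. \<psi> y \<noteq> 0}"
        then have "\<phi> (S y) \<noteq> 0" unfolding \<psi>_def by simp
        then have "S y \<in> K" unfolding K_def by (intro subsetD[OF closure_subset]) simp
        then have "T (S y) \<in> T ` K" by (rule imageI)
        then show "y \<in> T ` K" unfolding TS .
      qed
      have csub: "closure {y. \<psi> y \<noteq> 0} \<subseteq> T ` K"
        by (rule closure_minimal[OF sub compact_imp_closed[OF cTK]])
      have "compact (T ` K \<inter> closure {y. \<psi> y \<noteq> 0})"
        by (rule compact_Int_closed[OF cTK closed_closure])
      moreover have "T ` K \<inter> closure {y. \<psi> y \<noteq> 0} = closure {y. \<psi> y \<noteq> 0}"
        using csub by (rule Int_absorb1)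
      ultimately show "compact (closure {y. \<psi> y \<noteq> 0})" by simp
      have "T ` K \<subseteq> E"
      proof
        fix y assume "y \<in> T ` K"
        then obtain x where x: "x \<in> K" "y = T x" by blast
        have "x \<in> ball a r" using KA x(1) by (rule subsetD)
        then show "y \<in> E" unfolding x(2) memE .
      qed
      then show "closure {y. \<psi> y \<noteq> 0} \<subseteq> E" using csub by (rule order_trans[rotated])
    qed
    have hyp: "(LINT y:E|lebesgue. v y *\<^sub>R D\<psi> y) = - (LINT y:E|lebesgue. \<psi> y *\<^sub>R g y)"
      using wg tfpsi unfolding weak_gradient_def by blast
    have A1: "(LINT x:ball a r|lebesgue. v (T x) *\<^sub>R D\<psi> (T x)) = (1 / t ^ DIM('a)) *\<^sub>R (LINT y:E|lebesgue. v y *\<^sub>R D\<psi> y)"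
      using ball_aff_integral(1)[OF t, of a r "\<lambda>y. v y *\<^sub>R D\<psi> y" d] unfolding T_def E_def .
    have A2: "(LINT x:ball a r|lebesgue. \<psi> (T x) *\<^sub>R g (T x)) = (1 / t ^ DIM('a)) *\<^sub>R (LINT y:E|lebesgue. \<psi> y *\<^sub>R g y)"
      using ball_aff_integral(1)[OF t, of a r "\<lambda>y. \<psi> y *\<^sub>R g y" d] unfolding T_def E_def .
    have e1: "(\<lambda>x. v (T x) *\<^sub>R D\<psi> (T x)) = (\<lambda>x. (1/t) *\<^sub>R (v (T x) *\<^sub>R D\<phi> x))"
      unfolding D\<psi>_def ST by (simp add: scaleR_left_commute)
    have e2: "(\<lambda>x. \<psi> (T x) *\<^sub>R g (T x)) = (\<lambda>x. (1/t) *\<^sub>R (\<phi> x *\<^sub>R (t *\<^sub>R g (T x))))"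
      unfolding \<psi>_def ST using t0 by (simp add: scaleR_left_commute)
    have B1: "(1/t) *\<^sub>R (LINT x:ball a r|lebesgue. v (T x) *\<^sub>R D\<phi> x) = (1 / t ^ DIM('a)) *\<^sub>R (LINT y:E|lebesgue. v y *\<^sub>R D\<psi> y)"
      using A1 unfolding e1 set_integral_scaleR_right .
    have B2: "(1/t) *\<^sub>R (LINT x:ball a r|lebesgue. \<phi> x *\<^sub>R (t *\<^sub>R g (T x))) = (1 / t ^ DIM('a)) *\<^sub>R (LINT y:E|lebesgue. \<psi> y *\<^sub>R g y)"
      using A2 unfolding e2 set_integral_scaleR_right .
    have "(1/t) *\<^sub>R (LINT x:ball a r|lebesgue. v (T x) *\<^sub>R D\<phi> x) = (1/t) *\<^sub>R (- (LINT x:ball a r|lebesgue. \<phi> x *\<^sub>R (t *\<^sub>R g (T x))))"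
      unfolding B1 hyp scaleR_minus_right B2 ..
    then have "(LINT x:ball a r|lebesgue. v (T x) *\<^sub>R D\<phi> x) = - (LINT x:ball a r|lebesgue. \<phi> x *\<^sub>R (t *\<^sub>R g (T x))) \<or> 1/t = 0"
      by (simp only: scaleR_cancel_left)
    then show "(LINT x:ball a r|lebesgue. v (T x) *\<^sub>R D\<phi> x) = - (LINT x:ball a r|lebesgue. \<phi> x *\<^sub>R (t *\<^sub>R g (T x)))"
      using t0 by (simp only: divide_eq_0_iff one_neq_zero simp_thms)
  qed
  show ?thesis using M1 M2 I1 I2 WG unfolding W12_def T_def by blast
qed

lemma quotient_nonneg:
  assumes "\<beta> > 0"
  shows "0 \<le> robin_quotient \<beta> A v g"
  unfolding robin_quotient_def set_lebesgue_integral_def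
  using assms by (intro divide_nonneg_nonneg add_nonneg_nonneg mult_nonneg_nonneg Bochner_Integration.integral_nonneg) auto

lemma measure_lebesgue_ball:
  fixes c :: "'a::euclidean_space"
  assumes "0 \<le> \<rho>"
  shows "measure lebesgue (ball c \<rho>) = unit_ball_vol (real DIM('a)) * \<rho> ^ DIM('a)"
proof -
  have "measure lebesgue (ball c \<rho>) = measure lborel (ball c \<rho>)"
    by (rule measure_completion) simp
  also have "\<dots> = unit_ball_vol (real DIM('a)) * \<rho> ^ DIM('a)" by (rule content_ball[OF assms])
  finally show ?thesis .
qed

lemma quotient_transfer:
  fixes a d :: "'a::euclidean_space"
  assumes t: "t \<ge> 1" and r: "r > 0" and \<beta>: "\<beta> > 0"
  shows "robin_quotient \<beta> (ball a r) (\<lambda>x. v (d + t *\<^sub>R x)) (\<lambda>x. t *\<^sub>R g (d + t *\<^sub>R x))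
          \<le> t\<^sup>2 * robin_quotient \<beta> (ball (d + t *\<^sub>R a) (t * r)) v g"
proof -
  define n where "n = DIM('a)"
  define E where "E = ball (d + t *\<^sub>R a) (t * r)"
  define T where "T = (\<lambda>x::'a. d + t *\<^sub>R x)"
  have t0: "t > 0" using t by simp
  have n1: "n \<ge> 1" unfolding n_def using DIM_positive[where 'a='a] by linarith
  define G where "G = (LINT y:E|lebesgue. (norm (g y))\<^sup>2)"
  define D where "D = (LINT y:E|lebesgue. (v y)\<^sup>2)"
  define H where "H = enn2real (hausdorff_integral (DIM('a) - 1) (frontier E) (\<lambda>y. (boundary_trace E v y)\<^sup>2))"
  have G0: "0 \<le> G" unfolding G_def set_lebesgue_integral_def by (intro Bochner_Integration.integral_nonneg) auto
  have D0: "0 \<le> D" unfolding D_def set_lebesgue_integral_def by (intro Bochner_Integration.integral_nonneg) auto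
  have H0: "0 \<le> H" unfolding H_def by simp
  have Gr: "(LINT x:ball a r|lebesgue. (norm (t *\<^sub>R g (T x)))\<^sup>2) = t\<^sup>2 * ((1 / t ^ n) * G)"
  proof -
    have "(\<lambda>x. (norm (t *\<^sub>R g (T x)))\<^sup>2) = (\<lambda>x. t\<^sup>2 * (norm (g (T x)))\<^sup>2)"
      using t0 by (simp add: power_mult_distrib)
    moreover have "(LINT x:ball a r|lebesgue. (norm (g (T x)))\<^sup>2) = (1 / t ^ n) * G"
      using ball_aff_integral(1)[OF t0, of a r "\<lambda>y. (norm (g y))\<^sup>2" d] unfolding G_def E_def T_def n_def by simp
    ultimately show ?thesis by simp
  qed
  have Dr: "(LINT x:ball a r|lebesgue. (v (T x))\<^sup>2) = (1 / t ^ n) * D"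
    using ball_aff_integral(1)[OF t0, of a r "\<lambda>y. (v y)\<^sup>2" d] unfolding D_def E_def T_def n_def by simp
  have Hr: "enn2real (hausdorff_integral (DIM('a) - 1) (frontier (ball a r)) (\<lambda>x. (boundary_trace (ball a r) (\<lambda>x. v (T x)) x)\<^sup>2))
      = (1/t) ^ (n - 1) * H"
  proof -
    have fr: "frontier (ball a r) = sphere a r" using r by simp
    have frE: "frontier E = sphere (T a) (t * r)" unfolding E_def T_def using r t0 by simp
    have tr: "boundary_trace (ball a r) (\<lambda>x. v (T x)) x = boundary_trace E v (T x)" for x
      unfolding T_def E_def by (rule trace_aff[OF t0])
    have sets: "{x \<in> frontier (ball a r). (boundary_trace (ball a r) (\<lambda>x. v (T x)) x)\<^sup>2 > \<tau>}
        = (\<lambda>y. (1/t) *\<^sub>R y + (- (1/t) *\<^sub>R d)) ` {y \<in> frontier E. (boundary_trace E v y)\<^sup>2 > \<tau>}" for \<tau>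
    proof -
      have "(\<lambda>y. (1/t) *\<^sub>R y + (- (1/t) *\<^sub>R d)) ` {y \<in> frontier E. (boundary_trace E v y)\<^sup>2 > \<tau>}
          = T -` {y \<in> frontier E. (boundary_trace E v y)\<^sup>2 > \<tau>}"
        unfolding T_def by (rule aff_inv_image[OF t0])
      also have "\<dots> = {x \<in> T -` frontier E. (boundary_trace E v (T x))\<^sup>2 > \<tau>}" by auto
      also have "T -` frontier E = sphere a r" unfolding frE T_def by (rule aff_vimage_sphere[OF t0])
      finally show ?thesis unfolding fr tr by simp
    qed
    have "hausdorff_integral (DIM('a) - 1) (frontier (ball a r)) (\<lambda>x. (boundary_trace (ball a r) (\<lambda>x. v (T x)) x)\<^sup>2)
        = ennreal ((1/t) ^ (DIM('a) - 1)) * hausdorff_integral (DIM('a) - 1) (frontier E) (\<lambda>y. (boundary_trace E v y)\<^sup>2)"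
      by (rule hausdorff_integral_aff[where c="1/t" and d="- (1/t) *\<^sub>R d", OF _ sets]) (simp add: t0)
    then show ?thesis unfolding H_def n_def using t0 by (simp add: enn2real_mult)
  qed
  have Q: "robin_quotient \<beta> (ball a r) (\<lambda>x. v (T x)) (\<lambda>x. t *\<^sub>R g (T x))
      = (t\<^sup>2 * ((1 / t ^ n) * G) + \<beta> * ((1/t) ^ (n - 1) * H)) / ((1 / t ^ n) * D)"
    unfolding robin_quotient_def Gr Dr Hr ..
  have p: "(1/t) ^ (n - 1) = t * (1 / t ^ n)"
  proof -
    have "t ^ n = t * t ^ (n - 1)" using n1 by (metis power_eq_if not_one_le_zero)
    then show ?thesis using t0 by (simp add: power_one_over field_simps)
  qed
  have k: "1 / t ^ n > 0" using t0 by simp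
  have "(t\<^sup>2 * ((1 / t ^ n) * G) + \<beta> * ((1/t) ^ (n - 1) * H)) / ((1 / t ^ n) * D)
      = (t\<^sup>2 * G + \<beta> * t * H) / D"
    unfolding p using k by (simp add: field_simps)
  also have "\<dots> \<le> (t\<^sup>2 * G + t\<^sup>2 * (\<beta> * H)) / D"
  proof (rule divide_right_mono[OF _ D0])
    have "t \<le> t\<^sup>2" using t by (simp add: power2_eq_square)
    then have "t * (\<beta> * H) \<le> t\<^sup>2 * (\<beta> * H)" using \<beta> H0 by (intro mult_right_mono) auto
    then show "t\<^sup>2 * G + \<beta> * t * H \<le> t\<^sup>2 * G + t\<^sup>2 * (\<beta> * H)" by (simp add: ac_simps)
  qed
  also have "\<dots> = t\<^sup>2 * ((G + \<beta> * H) / D)" by (simp add: field_simps)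
  also have "(G + \<beta> * H) / D = robin_quotient \<beta> E v g"
    unfolding robin_quotient_def G_def H_def D_def ..
  finally show ?thesis using Q unfolding T_def E_def by simp
qed

lemma W12_const_ball:
  fixes b :: "'a::euclidean_space"
  assumes R: "R > 0"
  shows "W12 (ball b R) (\<lambda>_. 1) (\<lambda>_. 0)" "\<not> (AE x in lebesgue. x \<in> ball b R \<longrightarrow> (1::real) = 0)"
proof -
  have sb: "ball b R \<in> sets lebesgue" using lmeasurable_ball[of b R] by (rule fmeasurableD)
  have fin: "emeasure lebesgue (ball b R) < \<infinity>" using lmeasurable_ball[of b R] by (simp add: fmeasurable_def)
  have "(\<lambda>x. indicator (ball b R) x * (1::real)) = indicator (ball b R)" by simp
  moreover have "(indicator (ball b R) :: 'a \<Rightarrow> real) \<in> borel_measurable lebesgue"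
    using sb by (rule borel_measurable_indicator)
  ultimately have m1: "(\<lambda>x. indicator (ball b R) x * (1::real)) \<in> borel_measurable lebesgue" by simp
  have m2: "(\<lambda>x. indicator (ball b R) x *\<^sub>R (0::'a)) \<in> borel_measurable lebesgue" by simp
  have "integrable lebesgue (indicator (ball b R) :: 'a \<Rightarrow> real)"
    by (rule integrable_real_indicator[OF sb fin])
  then have i1: "set_integrable lebesgue (ball b R) (\<lambda>x. ((1::real))\<^sup>2)"
    unfolding set_integrable_def by simp
  have i2: "set_integrable lebesgue (ball b R) (\<lambda>x. (norm (0::'a))\<^sup>2)"
    unfolding set_integrable_def by simp
  show "W12 (ball b R) (\<lambda>_. 1) (\<lambda>_. 0)"
    unfolding W12_def using m1 m2 i1 i2 weak_gradient_const by blast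
  show "\<not> (AE x in lebesgue. x \<in> ball b R \<longrightarrow> (1::real) = 0)"
  proof
    assume "AE x in lebesgue. x \<in> ball b R \<longrightarrow> (1::real) = 0"
    then have "AE x in lebesgue. x \<notin> ball b R" by simp
    then have "ball b R \<in> null_sets lebesgue" using AE_iff_null_sets[OF sb] by simp
    then have "measure lebesgue (ball b R) = 0" by (rule measure_eq_0_null_sets)
    moreover have "measure lebesgue (ball b R) > 0"
      using measure_lebesgue_ball[of R b] R unit_ball_vol_pos[of "real DIM('a)"] by simp
    ultimately show False by simp
  qed
qed

theorem lemma2p16:
  fixes a b :: "'a::euclidean_space" and \<beta> r R :: real
  assumes "\<beta> > 0" and "0 < r" and "r < R"
  shows "robin_eigenvalue \<beta> (ball a r)
           \<le> (measure lebesgue (ball b R) / measure lebesgue (ball a r)) powr (2 / real DIM('a))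
              * robin_eigenvalue \<beta> (ball b R)"
proof -
  note \<beta> = assms(1) and r = assms(2)
  define n where "n = DIM('a)"
  have n1: "n \<ge> 1" unfolding n_def using DIM_positive[where 'a='a] by linarith
  define t where "t = R / r"
  have t1: "t \<ge> 1" unfolding t_def using assms by simp
  have t0: "t > 0" using t1 by simp
  define d where "d = b - t *\<^sub>R a"
  have bd: "d + t *\<^sub>R a = b" unfolding d_def by simp
  have tr: "t * r = R" unfolding t_def using r by simp
  define Sr where "Sr = {robin_quotient \<beta> (ball a r) v g | v g.
            W12 (ball a r) v g \<and> \<not> (AE x in lebesgue. x \<in> ball a r \<longrightarrow> v x = 0)}"
  define SR where "SR = {robin_quotient \<beta> (ball b R) v g | v g.
            W12 (ball b R) v g \<and> \<not> (AE x in lebesgue. x \<in> ball b R \<longrightarrow> v x = 0)}"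
  have ratio: "(measure lebesgue (ball b R) / measure lebesgue (ball a r)) powr (2 / real DIM('a)) = t\<^sup>2"
  proof -
    have u: "unit_ball_vol (real DIM('a)) > 0" by (rule unit_ball_vol_pos) simp
    have u': "unit_ball_vol (real DIM('a)) \<noteq> 0" using u by (rule less_imp_neq[THEN not_sym])
    have "measure lebesgue (ball b R) / measure lebesgue (ball a r)
        = (unit_ball_vol (real DIM('a)) * R ^ DIM('a)) / (unit_ball_vol (real DIM('a)) * r ^ DIM('a))"
      using measure_lebesgue_ball[of R b] measure_lebesgue_ball[of r a] assms by (simp only: less_imp_le order.strict_trans)
    also have "\<dots> = R ^ DIM('a) / r ^ DIM('a)" by (rule nonzero_mult_divide_mult_cancel_left[OF u'])
    also have "\<dots> = (R / r) ^ n" unfolding n_def by (rule power_divide[symmetric])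
    also have "\<dots> = t powr (real n)" unfolding t_def using assms by (simp add: powr_realpow)
    finally have "(measure lebesgue (ball b R) / measure lebesgue (ball a r)) powr (2 / real n) = t powr (real n * (2 / real n))"
      by (simp add: powr_powr)
    also have "real n * (2 / real n) = 2" using n1 by simp
    also have "t powr 2 = t\<^sup>2" using t0 by (simp add: powr_realpow[of t 2, simplified])
    finally show ?thesis unfolding n_def .
  qed
  have bdd: "bdd_below Sr"
    unfolding Sr_def by (rule bdd_belowI[of _ 0]) (use quotient_nonneg[OF \<beta>] in blast)
  have ne: "SR \<noteq> {}"
    unfolding SR_def using W12_const_ball[of R b] assms by auto
  have key: "Inf Sr \<le> t\<^sup>2 * q" if qS: "q \<in> SR" for q
  proof -
    obtain v g where q: "q = robin_quotient \<beta> (ball b R) v g" and W: "W12 (ball b R) v g"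
      and nAE: "\<not> (AE x in lebesgue. x \<in> ball b R \<longrightarrow> v x = 0)"
      using qS unfolding SR_def by blast
    define w where "w = (\<lambda>x. v (d + t *\<^sub>R x))"
    define h where "h = (\<lambda>x. t *\<^sub>R g (d + t *\<^sub>R x))"
    have Wr: "W12 (ball a r) w h"
      unfolding w_def h_def by (rule W12_transfer[OF t0]) (simp add: bd tr W)
    define D where "D = (LINT y:ball b R|lebesgue. (v y)\<^sup>2)"
    have D0: "D \<noteq> 0"
    proof
      assume "D = 0"
      have int: "integrable lebesgue (\<lambda>x. indicator (ball b R) x *\<^sub>R (v x)\<^sup>2)"
        using W unfolding W12_def set_integrable_def by blast
      have "AE x in lebesgue. indicator (ball b R) x *\<^sub>R (v x)\<^sup>2 = 0"
        using integral_nonneg_eq_0_iff_AE[OF int] \<open>D = 0\<close> unfolding D_def set_lebesgue_integral_def by simp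
      then have "AE x in lebesgue. x \<in> ball b R \<longrightarrow> v x = 0"
        by (rule eventually_mono) (simp add: indicator_def split: if_splits)
      with nAE show False by contradiction
    qed
    have Dr: "(LINT x:ball a r|lebesgue. (w x)\<^sup>2) = (1 / t ^ DIM('a)) * D"
      using ball_aff_integral(1)[OF t0, of a r "\<lambda>y. (v y)\<^sup>2" d] unfolding w_def D_def bd tr by simp
    have nAEr: "\<not> (AE x in lebesgue. x \<in> ball a r \<longrightarrow> w x = 0)"
    proof
      assume "AE x in lebesgue. x \<in> ball a r \<longrightarrow> w x = 0"
      then have "AE x in lebesgue. indicator (ball a r) x *\<^sub>R (w x)\<^sup>2 = 0"
        by (rule eventually_mono) (simp add: indicator_def)
      then have "(LINT x:ball a r|lebesgue. (w x)\<^sup>2) = 0"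
        unfolding set_lebesgue_integral_def by (rule integral_eq_zero_AE)
      then show False using Dr D0 t0 by simp
    qed
    have mem: "robin_quotient \<beta> (ball a r) w h \<in> Sr"
      unfolding Sr_def using Wr nAEr by blast
    have "Inf Sr \<le> robin_quotient \<beta> (ball a r) w h" by (rule cInf_lower[OF mem bdd])
    also have "\<dots> \<le> t\<^sup>2 * robin_quotient \<beta> (ball (d + t *\<^sub>R a) (t * r)) v g"
      unfolding w_def h_def by (rule quotient_transfer[OF t1 r \<beta>])
    finally show ?thesis unfolding q bd tr .
  qed
  have "Inf Sr / t\<^sup>2 \<le> Inf SR"
  proof (rule cInf_greatest[OF ne])
    fix q assume "q \<in> SR"
    from key[OF this] show "Inf Sr / t\<^sup>2 \<le> q" using t0 by (simp add: pos_divide_le_eq mult.commute)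
  qed
  then have "Inf Sr \<le> t\<^sup>2 * Inf SR" using t0 by (simp add: pos_divide_le_eq mult.commute)
  then show ?thesis unfolding ratio robin_eigenvalue_def Sr_def[symmetric] SR_def[symmetric] .
qed

end
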